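(* Let $d\ge2$ be an integer. For $\lambda\in(0,1)$ let $\bar F_\lambda$ be the solution of $\bar F'(w)=\lambda\bar F(w)^d-\bar F(w)$, $\bar F(0)=\lambda$, and let $\mathbb E[W_\lambda]=\int_0^\infty\bar F_\lambda(w)^d\,dw$. Then $$\lim_{\lambda\to1^-}-\frac{\mathbb E[W_\lambda]}{\log(1-\lambda)}=\frac1{d-1}.$$
   Context: $\bar F_\lambda$ is the limiting ccdf of the workload of a queue under the LL($d$) policy (exponential job sizes of mean 1, arrival rate $\lambda$ per server), and $\mathbb E[W_\lambda]$ the corresponding mean waiting time. *)

theory Defs
  imports "HOL-Analysis.Analysis"
begin

definition LL_ccdf :: "nat \<Rightarrow> real \<Rightarrow> (real \<Rightarrow> real) \<Rightarrow> bool" where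
  "LL_ccdf d lam F \<longleftrightarrow> F 0 = lam \<and>
     (\<forall>w\<ge>0. (F has_real_derivative (lam * F w ^ d - F w)) (at w within {0..}))"

definition mean_wait :: "nat \<Rightarrow> (real \<Rightarrow> real) \<Rightarrow> real" where
  "mean_wait d F = integral {0..} (\<lambda>w. F w ^ d)"

end

theory Submission
  imports Defs
begin


lemma solA:
  fixes m :: nat and lam :: real and F :: "real \<Rightarrow> real"
  assumes lam: "0 < lam" "lam < 1" and LL: "LL_ccdf (m+2) lam F"
  defines "c \<equiv> 1 / lam ^ (m+1) - lam"
  shows "\<forall>w\<ge>0. F w > 0 \<and> F w ^ (m+1) * (lam + c * exp (real (m+1) * w)) = 1"
proof -
  define kk where "kk = real (m+1)"
  define g where "g w = lam + c * exp (kk * w)" for w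
  define u where "u w = F w ^ (m+1)" for w
  define K where "K w = u w * g w - 1" for w
  have F0: "F 0 = lam" using LL by (simp add: LL_ccdf_def)
  have dF: "(F has_real_derivative (lam * F w ^ (m+2) - F w)) (at w within {0..})" if "w \<ge> 0" for w
    using LL that by (simp add: LL_ccdf_def)
  have contF: "continuous_on {0..} F"
    using dF by (meson atLeast_iff continuous_on_eq_continuous_within DERIV_continuous)
  have du: "(u has_real_derivative (kk * (lam * u w ^ 2 - u w))) (at w within {0..})" if "w \<ge> 0" for w
  proof -
    have "(u has_real_derivative (real (m+1) * F w ^ m * (lam * F w ^ (m+2) - F w))) (at w within {0..})"
      unfolding u_def by (rule derivative_eq_intros dF[OF that] refl | simp)+
    moreover have "real (m+1) * F w ^ m * (lam * F w ^ (m+2) - F w) = kk * (lam * u w ^ 2 - u w)"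
    proof -
      have e1: "F w ^ m * F w ^ (m+2) = (F w^(m+1))^2" by (simp add: power2_eq_square flip: power_add)
      have e2: "F w ^ m * F w = F w^(m+1)" by simp
      have "real (m+1) * F w ^ m * (lam * F w ^ (m+2) - F w) = real (m+1) * (lam * (F w ^ m * F w ^ (m+2)) - F w ^ m * F w)"
        by (simp only: right_diff_distrib mult_ac)
      also have "\<dots> = kk * (lam * u w ^ 2 - u w)" by (simp only: e1 e2 u_def kk_def)
      finally show ?thesis .
    qed
    ultimately show ?thesis by simp
  qed
  have dg: "(g has_real_derivative (kk * (g w - lam))) (at w within {0..})" for w
  proof -
    have "(g has_real_derivative (c * (exp (kk*w) * kk))) (at w within {0..})"
      unfolding g_def by (rule derivative_eq_intros refl | simp)+
    then show ?thesis by (simp add: g_def algebra_simps)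
  qed
  have dK: "(K has_real_derivative (kk * lam * u w * K w)) (at w within {0..})" if "w \<ge> 0" for w
  proof -
    have "(K has_real_derivative (kk * (lam * u w ^ 2 - u w) * g w + u w * (kk * (g w - lam)))) (at w within {0..})"
      unfolding K_def by (rule derivative_eq_intros du[OF that] dg refl | simp)+
    moreover have "kk * (lam * u w ^ 2 - u w) * g w + u w * (kk * (g w - lam)) = kk * lam * u w * K w"
      by (simp add: K_def algebra_simps power2_eq_square)
    ultimately show ?thesis by simp
  qed
  have K0: "K 0 = 0"
    using lam by (simp add: K_def u_def g_def c_def F0 field_simps)
  have contu: "continuous_on {0..} u"
    unfolding u_def by (intro continuous_intros contF)
  have Kz: "K T = 0" if T: "T \<ge> 0" for T
  proof -
    define a where "a t = kk * lam * u t" for t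
    define A where "A x = integral {0..x} a" for x
    have ca: "continuous_on {0..T} a"
      unfolding a_def by (intro continuous_intros continuous_on_subset[OF contu]) auto
    have dA: "(A has_real_derivative a x) (at x within {0..T})" if "x \<in> {0..T}" for x
      unfolding A_def using integral_has_vector_derivative[OF ca that]
      by (simp add: has_real_derivative_iff_has_vector_derivative)
    define P where "P x = K x * exp (- A x)" for x
    have dP: "(P has_real_derivative 0) (at x within {0..T})" if x: "x \<in> {0..T}" for x
    proof -
      have dK': "(K has_real_derivative (kk * lam * u x * K x)) (at x within {0..T})"
        using dK[of x] x by (auto intro: has_field_derivative_subset)
      have "(P has_real_derivative (kk * lam * u x * K x * exp (- A x) + K x * (exp (- A x) * (- a x)))) (at x within {0..T})"
        unfolding P_def by (rule derivative_eq_intros dK' dA[OF x] refl | simp)+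
      then show ?thesis by (simp add: a_def)
    qed
    obtain C where C: "\<forall>x\<in>{0..T}. P x = C"
      using has_field_derivative_zero_constant[of "{0..T}" P] dP by auto
    have "P 0 = 0" by (simp add: P_def K0)
    then have "P T = 0" using C T by auto
    then show ?thesis by (simp add: P_def)
  qed
  have gpos: "g w > 0" for w
  proof -
    have "lam ^ (m+1) < 1" using power_Suc_less_one[OF lam, of m] by simp
    then have "1 < 1 / lam ^ (m+1)" using lam by (simp add: less_divide_eq)
    then have "c > 0" using lam unfolding c_def by linarith
    then show ?thesis using lam by (simp add: g_def add_pos_pos)
  qed
  show ?thesis
  proof (intro allI impI conjI)
    fix w :: real assume w: "w \<ge> 0"
    have ug: "u w * g w = 1" using Kz[OF w] by (simp add: K_def)
    show "F w ^ (m+1) * (lam + c * exp (real (m+1) * w)) = 1" using ug by (simp add: u_def g_def kk_def)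
    have nz: "F t \<noteq> 0" if "t \<ge> 0" for t
    proof
      assume "F t = 0"
      then have "u t * g t = 0" by (simp add: u_def)
      with Kz[OF that] show False by (simp add: K_def)
    qed
    show "F w > 0"
    proof (rule ccontr)
      assume "\<not> F w > 0"
      then have "F w \<le> 0" by simp
      moreover have "continuous_on {0..w} F" using continuous_on_subset[OF contF] by auto
      ultimately obtain t where "0 \<le> t" "t \<le> w" "F t = 0"
        using IVT2'[of F w 0 0] w F0 lam by auto
      with nz show False by auto
    qed
  qed
qed



lemma intB:
  fixes m :: nat and lam c kk p w0 :: real and f :: "real \<Rightarrow> real"
  assumes lam: "0 < lam" and c: "0 < c" "c \<le> lam"
  and kk_def: "kk = real (m+1)" and p_def: "p = real (m+2) / real (m+1)"
    and w0_def: "w0 = ln (lam / c) / real (m+1)"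
    and f_def: "f = (\<lambda>w. (lam + c * exp (kk * w)) powr (- p))"
  shows "f integrable_on {0..}"
    and "integral {0..} f \<le> lam powr (-p) * (w0 + 1 / real (m+2))"
    and "lam powr (-p) * (w0 - p / kk) \<le> integral {0..} f"
proof -
  have kk: "kk > 0" by (simp add: kk_def)
  have p: "p > 0" by (simp add: p_def)
  have pkk: "p * kk = real (m+2)" by (simp add: p_def kk_def)
  have w0: "w0 \<ge> 0" using lam c by (simp add: w0_def)
  have ew0: "exp (kk * w0) = lam / c" using lam c by (simp add: w0_def kk_def)
  have Sleb: "{0::real..} \<in> sets lebesgue" by simp
  define h1 where "h1 w = (if w \<in> {0..w0} then lam powr (-p) else 0)" for w
  define h2 where "h2 w = (if w \<in> {w0..} then c powr (-p) * exp (- real (m+2) * w) else 0)" for w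
  have i1: "(h1 has_integral (lam powr (-p) * w0)) {0..}"
  proof -
    have "((\<lambda>w. lam powr (-p)) has_integral (lam powr (-p) * w0)) {0..w0}"
      using has_integral_const_real[of "lam powr (-p)" 0 w0] w0 by (simp add: mult.commute)
    then show ?thesis unfolding h1_def by (subst has_integral_restrict) auto
  qed
  have i2: "(h2 has_integral (c powr (-p) * (exp (- real (m+2) * w0) / real (m+2)))) {0..}"
  proof -
    have "((\<lambda>w. c powr (-p) * exp (- real (m+2) * w)) has_integral (c powr (-p) * (exp (- real (m+2) * w0) / real (m+2)))) {w0..}"
      by (intro has_integral_mult_right has_integral_exp_minus_to_infinity) simp
    then show ?thesis unfolding h2_def using w0 by (subst has_integral_restrict) auto
  qed
  have ih: "((\<lambda>w. h1 w + h2 w) has_integral (lam powr (-p) * w0 + c powr (-p) * (exp (- real (m+2) * w0) / real (m+2)))) {0..}"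
    by (intro has_integral_add i1 i2)
  have key: "c powr (-p) * exp (- real (m+2) * w0) = lam powr (-p)"
  proof -
    have "real (m+2) * w0 = p * (ln lam - ln c)"
      using lam c by (simp add: w0_def p_def ln_div)
    then have e: "- real (m+2) * w0 = - (p * (ln lam - ln c))" by (metis mult_minus_left)
    have "c powr (-p) * exp (- real (m+2) * w0) = exp (-p * ln c) * exp (- (p * (ln lam - ln c)))"
      using c unfolding e by (simp add: powr_def)
    also have "\<dots> = exp (-p * ln c + - (p * (ln lam - ln c)))" by (simp only: exp_add)
    also have "\<dots> = lam powr (-p)" using lam by (simp add: powr_def algebra_simps)
    finally show ?thesis .
  qed
  have gpos: "lam + c * exp (kk * w) > 0" for w using lam c by (simp add: add_pos_pos)
  have fnn: "f w \<ge> 0" for w by (simp add: f_def)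
  have fh: "f w \<le> h1 w + h2 w" if w: "w \<ge> 0" for w
  proof (cases "w \<le> w0")
    case True
    have "f w \<le> lam powr (-p)" unfolding f_def
      using p lam c by (intro powr_mono2') auto
    moreover have "h2 w \<ge> 0" by (simp add: h2_def)
    ultimately show ?thesis using True w by (simp add: h1_def)
  next
    case False
    have "f w \<le> (c * exp (kk * w)) powr (-p)" unfolding f_def
      using p lam c by (intro powr_mono2') auto
    also have "\<dots> = c powr (-p) * exp (- real (m+2) * w)"
    proof -
      have "exp (kk*w) powr (-p) = exp (-p*(kk*w))" by (simp add: powr_def)
      also have "\<dots> = exp (- real (m+2) * w)" by (simp only: mult.assoc[symmetric] mult_minus_left pkk)
      finally show ?thesis by (simp add: powr_mult)
    qed
    finally show ?thesis using False by (simp add: h1_def h2_def)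
  qed
  have contf: "continuous_on {0..} f"
    unfolding f_def using gpos by (intro continuous_intros) (auto simp: less_imp_neq[symmetric])
  show fint: "f integrable_on {0..}"
    by (rule measurable_bounded_by_integrable_imp_integrable_real[OF continuous_imp_measurable_on_sets_lebesgue[OF contf Sleb] _ _ Sleb])
       (use ih fh fnn in auto)
  have "integral {0..} f \<le> integral {0..} (\<lambda>w. h1 w + h2 w)"
    by (rule integral_le[OF fint]) (use ih fh in auto)
  also have "\<dots> = lam powr (-p) * w0 + c powr (-p) * (exp (- real (m+2) * w0) / real (m+2))"
    using ih by (simp add: integral_unique)
  also have "\<dots> = lam powr (-p) * (w0 + 1 / real (m+2))"
    using key by (simp add: algebra_simps)
  finally show "integral {0..} f \<le> lam powr (-p) * (w0 + 1 / real (m+2))" .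
  define l where "l w = (if w \<in> {0..w0} then lam powr (-p) * (1 - p * (c/lam) * exp (kk * w)) else 0)" for w
  define G where "G w = lam powr (-p) * (w - p * (c/lam) * exp (kk * w) / kk)" for w
  have il: "(l has_integral (G w0 - G 0)) {0..}"
  proof -
    have "((\<lambda>w. lam powr (-p) * (1 - p * (c/lam) * exp (kk * w))) has_integral (G w0 - G 0)) {0..w0}"
    proof (rule fundamental_theorem_of_calculus[OF w0])
      fix x assume "x \<in> {0..w0}"
      have "(G has_real_derivative lam powr (-p) * (1 - p * (c/lam) * exp (kk * x))) (at x within {0..w0})"
        unfolding G_def using kk lam by (auto intro!: derivative_eq_intros simp: field_simps)
      then show "(G has_vector_derivative lam powr (-p) * (1 - p * (c/lam) * exp (kk * x))) (at x within {0..w0})"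
        using kk by (simp add: has_real_derivative_iff_has_vector_derivative)
    qed
    then show ?thesis unfolding l_def by (subst has_integral_restrict) auto
  qed
  have Gv: "G w0 - G 0 \<ge> lam powr (-p) * (w0 - p / kk)"
  proof -
    have "G w0 - G 0 = lam powr (-p) * (w0 - p / kk + p * (c / lam) / kk)"
      using ew0 lam c kk by (simp add: G_def field_simps)
    moreover have "p * (c / lam) / kk \<ge> 0" using p c lam kk by simp
    ultimately show ?thesis using lam by (simp add: mult_left_mono)
  qed
  have lf: "l w \<le> f w" if w: "w \<ge> 0" for w
  proof (cases "w \<le> w0")
    case True
    define x where "x = c / lam * exp (kk * w)"
    have x: "x \<ge> 0" using c lam by (simp add: x_def)
    have "lam + c * exp (kk * w) = lam * (1 + x)" using lam by (simp add: x_def field_simps)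
    then have fw: "f w = lam powr (-p) * (1 + x) powr (-p)"
      using lam x by (simp add: f_def powr_mult)
    have "(1 + x) powr (-p) = exp (- p * ln (1 + x))" using x by (simp add: powr_def)
    also have "\<dots> \<ge> 1 + (- p * ln (1 + x))" by (rule exp_ge_add_one_self)
    finally have A: "(1 + x) powr (-p) \<ge> 1 + (- p * ln (1 + x))" .
    have "p * ln (1 + x) \<le> p * x" using ln_add_one_self_le_self[OF x] p by (intro mult_left_mono) auto
    then have "(1 + x) powr (-p) \<ge> 1 - p * x" using A by linarith
    then have "lam powr (-p) * (1 - p * x) \<le> f w" using fw lam by (simp add: mult_left_mono)
    then show ?thesis using True w by (simp add: l_def x_def mult.assoc)
  next
    case False then show ?thesis using fnn by (simp add: l_def)
  qed
  have "integral {0..} l \<le> integral {0..} f"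
    by (rule integral_le[OF _ fint]) (use il lf in auto)
  then show "lam powr (-p) * (w0 - p / kk) \<le> integral {0..} f"
    using il Gv by (simp add: integral_unique)
qed



lemma algC:
  fixes P q a LL s kk C :: real
  assumes "kk \<noteq> 0" "LL \<noteq> 0"
  shows "P * ((q * a - (- LL + s)) / kk + C) / (- (- LL)) = P * (1/kk) * (1 + (q * a - s + kk * C) * (1 / LL))"
  using assms by (simp add: field_simps)

lemma limC:
  fixes m :: nat and C p :: real
  shows "((\<lambda>l. l powr (-p) * (ln (l / (1 / l ^ (m+1) - l)) / real (m+1) + C) / (- ln (1 - l))) \<longlongrightarrow> 1 / real (m+1)) (at_left 1)"
proof -
  define kk where "kk = real (m+1)"
  define S where "S l = (\<Sum>i<m+2. l ^ i)" for l :: real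
  define L where "L l = - ln (1 - l)" for l :: real
  have kk: "kk > 0" by (simp add: kk_def)
  have ev01: "eventually (\<lambda>x. x \<in> {0<..<1}) (at_left (1::real))" by (rule eventually_at_left_real) simp
  have L0: "((\<lambda>l. 1 / L l) \<longlongrightarrow> 0) (at_left (1::real))"
  proof -
    have f1: "filterlim (\<lambda>l::real. 1 - l) (at_right 0) (at_left 1)"
      unfolding filterlim_at
      by (auto intro!: tendsto_eq_intros eventually_mono[OF eventually_at_left_real[of 0 1]])
    have "filterlim (\<lambda>l. ln (1 - l)) at_bot (at_left (1::real))"
      by (rule filterlim_compose[OF ln_at_0 f1])
    then have "filterlim L at_top (at_left (1::real))"
      unfolding L_def by (simp add: filterlim_uminus_at_top)
    then show ?thesis using tendsto_inverse_0_at_top by (simp add: divide_inverse)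
  qed
  have S1: "(S \<longlongrightarrow> real (m+2)) (at_left 1)"
  proof -
    have "(S \<longlongrightarrow> (\<Sum>i<m+2. (1::real) ^ i)) (at_left 1)"
      unfolding S_def by (intro tendsto_intros)
    then show ?thesis by simp
  qed
  have lim: "((\<lambda>l. l powr (-p) * (1/kk) * (1 + (real (m+2) * ln l - ln (S l) + kk * C) * (1 / L l)))
      \<longlongrightarrow> 1 powr (-p) * (1/kk) * (1 + (real (m+2) * ln 1 - ln (real (m+2)) + kk * C) * 0)) (at_left 1)"
    by (intro tendsto_intros L0 S1) auto
  have ev: "eventually (\<lambda>l. l powr (-p) * (ln (l / (1 / l ^ (m+1) - l)) / real (m+1) + C) / (- ln (1 - l)) =
      l powr (-p) * (1/kk) * (1 + (real (m+2) * ln l - ln (S l) + kk * C) * (1 / L l))) (at_left 1)"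
    using ev01
  proof (rule eventually_mono)
    fix l :: real assume l: "l \<in> {0<..<1}"
    have Spos: "S l > 0"
    proof -
      have "S l = 1 + (\<Sum>i<m+1. l ^ Suc i)" unfolding S_def by (simp add: sum.lessThan_Suc_shift del: sum.lessThan_Suc)
      moreover have "(\<Sum>i<m+1. l ^ Suc i) \<ge> 0" using l by (intro sum_nonneg) auto
      ultimately show ?thesis by simp
    qed
    have lp: "l ^ (m+1) > 0" using l by simp
    have "1 / l ^ (m+1) - l = (1 - l ^ (m+2)) / l ^ (m+1)"
    proof -
      have e: "l ^ (m+2) / l ^ (m+1) = l" using lp by (simp add: field_simps)
      show ?thesis by (simp only: diff_divide_distrib e)
    qed
    also have "\<dots> = (1 - l) * S l / l ^ (m+1)" unfolding S_def by (simp only: one_diff_power_eq)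
    finally have ceq: "1 / l ^ (m+1) - l = (1 - l) * S l / l ^ (m+1)" .
    have "l / (1 / l ^ (m+1) - l) = l ^ (m+2) / ((1 - l) * S l)"
      unfolding ceq using l lp Spos by (simp add: field_simps)
    then have lneq: "ln (l / (1 / l ^ (m+1) - l)) = real (m+2) * ln l - (ln (1 - l) + ln (S l))"
    proof -
      assume h: "l / (1 / l ^ (m+1) - l) = l ^ (m+2) / ((1 - l) * S l)"
      have p1: "l ^ (m+2) > 0" "(1 - l) * S l > 0" "1 - l > 0" using l Spos by auto
      have "ln (l ^ (m+2) / ((1 - l) * S l)) = ln (l ^ (m+2)) - ln ((1 - l) * S l)"
        using p1 by (intro ln_divide_pos)
      also have "ln ((1 - l) * S l) = ln (1 - l) + ln (S l)" using p1(3) Spos by (simp add: ln_mult)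
      also have "ln (l ^ (m+2)) = real (m+2) * ln l" by (rule ln_realpow)
      finally show ?thesis unfolding h .
    qed
    have Lp: "L l > 0" using l by (simp add: L_def)
    show "l powr (-p) * (ln (l / (1 / l ^ (m+1) - l)) / real (m+1) + C) / (- ln (1 - l)) =
      l powr (-p) * (1/kk) * (1 + (real (m+2) * ln l - ln (S l) + kk * C) * (1 / L l))"
    proof -
      have e: "ln (1 - l) = - L l" by (simp add: L_def)
      show ?thesis unfolding lneq kk_def[symmetric] e
        by (rule algC) (use Lp kk in auto)
    qed
  qed
  show ?thesis
    using lim by (subst tendsto_cong[OF ev]) (simp add: kk_def)
qed



lemma Fpow:
  fixes m :: nat and lam :: real and F :: "real \<Rightarrow> real"
  assumes lam: "0 < lam" "lam < 1" and LL: "LL_ccdf (m+2) lam F" and w: "w \<ge> 0"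
  shows "F w ^ (m+2) = (lam + (1 / lam ^ (m+1) - lam) * exp (real (m+1) * w)) powr (- (real (m+2) / real (m+1)))"
proof -
  define g where "g = lam + (1 / lam ^ (m+1) - lam) * exp (real (m+1) * w)"
  from solA[OF lam LL] w have Fp: "F w > 0" and Fg: "F w ^ (m+1) * g = 1" by (auto simp: g_def)
  have g: "g = 1 / F w ^ (m+1)" using Fg Fp by (simp add: field_simps)
  have gp: "g > 0" using g Fp by simp
  have lng: "ln g = - (real (m+1) * ln (F w))"
  proof -
    have "ln g = ln 1 - ln (F w ^ (m+1))" unfolding g by (rule ln_divide_pos) (use Fp in auto)
    also have "ln (F w ^ (m+1)) = real (m+1) * ln (F w)" by (rule ln_realpow)
    finally show ?thesis by simp
  qed
  have "g powr (- (real (m+2) / real (m+1))) = exp (- (real (m+2) / real (m+1)) * ln g)"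
    using gp by (simp add: powr_def)
  also have "- (real (m+2) / real (m+1)) * ln g = real (m+2) * ln (F w)"
    unfolding lng by (simp del: of_nat_add)
  also have "exp (real (m+2) * ln (F w)) = F w ^ (m+2)"
  proof -
    have "exp (ln (F w ^ (m+2))) = F w ^ (m+2)" using Fp by simp
    then show ?thesis by (simp only: ln_realpow)
  qed
  finally show ?thesis by (simp add: g_def)
qed

theorem corollary2p3:
  fixes d :: nat and F :: "real \<Rightarrow> real \<Rightarrow> real"
  assumes "d \<ge> 2"
    and "\<And>lam. 0 < lam \<Longrightarrow> lam < 1 \<Longrightarrow> LL_ccdf d lam (F lam)"
  shows "((\<lambda>lam. - mean_wait d (F lam) / ln (1 - lam)) \<longlongrightarrow> 1 / (real d - 1)) (at_left 1)"
proof -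
  obtain m where dm: "d = m + 2" using le_Suc_ex[OF assms(1)] by (auto simp: add.commute)
  define kk where "kk = real (m+1)"
  define p where "p = real (m+2) / real (m+1)"
  define c where "c l = 1 / l ^ (m+1) - l" for l :: real
  define w0 where "w0 l = ln (l / c l) / real (m+1)" for l :: real
  have LL: "LL_ccdf (m+2) l (F l)" if "0 < l" "l < 1" for l using assms(2)[OF that] dm by simp
  have cpos: "c l > 0" if l: "0 < l" "l < 1" for l
  proof -
    have "l ^ (m+1) < 1" using power_Suc_less_one[OF l, of m] by simp
    then have "1 < 1 / l ^ (m+1)" using l by (simp add: less_divide_eq)
    then show ?thesis using l unfolding c_def by linarith
  qed
  have bounds: "l powr (-p) * (w0 l - p / kk) / (- ln (1 - l)) \<le> - mean_wait d (F l) / ln (1 - l) \<and>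
                - mean_wait d (F l) / ln (1 - l) \<le> l powr (-p) * (w0 l + 1 / real (m+2)) / (- ln (1 - l))"
    if l: "0 < l" "l < 1" and cl: "c l \<le> l" for l
  proof -
    define f where "f = (\<lambda>w. (l + c l * exp (kk * w)) powr (- p))"
    have mw: "mean_wait d (F l) = integral {0..} f"
      unfolding mean_wait_def dm f_def kk_def p_def c_def
      by (rule integral_cong) (use Fpow[OF l LL[OF l]] in auto)
    note B = intB[OF l(1) cpos[OF l] cl kk_def p_def w0_def f_def]
    have Lp: "- ln (1 - l) > 0" using l by simp
    have e: "- mean_wait d (F l) / ln (1 - l) = mean_wait d (F l) / (- ln (1 - l))"
      by (simp add: divide_simps)
    show ?thesis unfolding e mw using B(2,3) Lp by (auto intro!: divide_right_mono divide_right_mono_neg)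
  qed
  have c0: "(c \<longlongrightarrow> 0) (at_left 1)"
  proof -
    have "(c \<longlongrightarrow> 1 / 1 ^ (m+1) - 1) (at_left 1)" unfolding c_def by (intro tendsto_intros) auto
    then show ?thesis by simp
  qed
  have ev: "eventually (\<lambda>l. 0 < l \<and> l < 1 \<and> c l \<le> l) (at_left (1::real))"
  proof -
    have e1: "eventually (\<lambda>x. x \<in> {1/2<..<1}) (at_left (1::real))" by (rule eventually_at_left_real) simp
    have e2: "eventually (\<lambda>l. c l < 1/2) (at_left (1::real))" using order_tendstoD(2)[OF c0, of "1/2"] by simp
    show ?thesis using e1 e2 by eventually_elim auto
  qed
  have limL: "((\<lambda>l. l powr (-p) * (w0 l - p / kk) / (- ln (1 - l))) \<longlongrightarrow> 1 / real (m+1)) (at_left 1)"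
    using limC[of p m "- p / kk"] by (simp add: w0_def c_def)
  have limU: "((\<lambda>l. l powr (-p) * (w0 l + 1 / real (m+2)) / (- ln (1 - l))) \<longlongrightarrow> 1 / real (m+1)) (at_left 1)"
    using limC[of p m "1 / real (m+2)"] by (simp add: w0_def c_def)
  have "((\<lambda>lam. - mean_wait d (F lam) / ln (1 - lam)) \<longlongrightarrow> 1 / real (m+1)) (at_left 1)"
    by (rule tendsto_sandwich[OF _ _ limL limU]) (use ev bounds in \<open>auto elim: eventually_mono\<close>)
  then show ?thesis by (simp add: dm)
qed

end
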